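(* Let $r$ be a positive integer and let $G$ be a graph containing the $r$-grid $W_r$ as a minor, witnessed by branch sets $V_h\subseteq V(G)$, $h\in V(W_r)$. Let $\mathcal{T}'$ be the natural tangle of $W_r$ and let $\mathcal{T}$ be its extension to $G$. Then for every separation $(A,B)\in\mathcal{T}$ of order $s$, the set $A$ meets at most $s^2$ of the branch sets $V_h$.
   Context: For a positive integer $r$, the $r$-grid $W_r$ has vertex set $\{(i,j):1\le i,j\le r\}$, with $(i,j)$ adjacent to $(i',j')$ iff $|i-i'|+|j-j'|=1$. Its $j$th column is $\{1,\dots,r\}\times\{j\}$, its $i$th row is $\{i\}\times\{1,\dots,r\}$, and the union of a row and a column is a cross. A separation of a graph is a pair $(A,B)$ of vertex sets whose union is the whole vertex set such that no edge joins $A\setminus B$ to $B\setminus A$; its order is $|A\cap B|$. The natural tangle $\mathcal{T}'$ of $W_r$ is the set of all separations $(A',B')$ of $W_r$ of order less than $r$ such that $B'$ contains a cross. That $W_r$ is a minor of $G$ witnessed by branch sets $V_h$ means the $V_h$ ($h\in V(W_r)$) are pairwise disjoint vertex sets of $G$, each inducing a connected subgraph, and $G$ has an edge between $V_h$ and $V_{h'}$ whenever $hh'$ is an edge of $W_r$. For a separation $(A,B)$ of $G$, the induced separation of $W_r$ is $(A',B'):=(\{h: V_h\cap A\neq\emptyset\},\{h:V_h\cap B\ne\emptyset\})$. The extension $\mathcal{T}$ of $\mathcal{T}'$ to $G$ is the set of all separations $(A,B)$ of $G$ of order less than $r$ whose induced separation $(A',B')$ lies in $\mathcal{T}'$. 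*)

theory Defs
  imports Main
begin

definition graph :: "'a set \<Rightarrow> ('a \<Rightarrow> 'a \<Rightarrow> bool) \<Rightarrow> bool" where
  "graph V E \<longleftrightarrow> (\<forall>x y. E x y \<longrightarrow> x \<in> V \<and> y \<in> V \<and> E y x \<and> x \<noteq> y)"

definition connected_set :: "('a \<Rightarrow> 'a \<Rightarrow> bool) \<Rightarrow> 'a set \<Rightarrow> bool" where
  "connected_set E X \<longleftrightarrow> X \<noteq> {} \<and>
     (\<forall>x\<in>X. \<forall>y\<in>X. (\<lambda>u v. u \<in> X \<and> v \<in> X \<and> E u v)\<^sup>*\<^sup>* x y)"

definition separation :: "'a set \<Rightarrow> ('a \<Rightarrow> 'a \<Rightarrow> bool) \<Rightarrow> 'a set \<Rightarrow> 'a set \<Rightarrow> bool" where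
  "separation V E A B \<longleftrightarrow> A \<union> B = V \<and>
     (\<forall>x\<in>A - B. \<forall>y\<in>B - A. \<not> E x y)"

definition order_less :: "'a set \<Rightarrow> 'a set \<Rightarrow> nat \<Rightarrow> bool" where
  "order_less A B r \<longleftrightarrow> finite (A \<inter> B) \<and> card (A \<inter> B) < r"

definition grid_V :: "nat \<Rightarrow> (nat \<times> nat) set" where
  "grid_V r = {1..r} \<times> {1..r}"

definition grid_E :: "nat \<Rightarrow> nat \<times> nat \<Rightarrow> nat \<times> nat \<Rightarrow> bool" where
  "grid_E r h h' \<longleftrightarrow> h \<in> grid_V r \<and> h' \<in> grid_V r \<and>
     \<bar>int (fst h) - int (fst h')\<bar> + \<bar>int (snd h) - int (snd h')\<bar> = 1"

definition grid_row :: "nat \<Rightarrow> nat \<Rightarrow> (nat \<times> nat) set" where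
  "grid_row r i = {i} \<times> {1..r}"

definition grid_column :: "nat \<Rightarrow> nat \<Rightarrow> (nat \<times> nat) set" where
  "grid_column r j = {1..r} \<times> {j}"

definition grid_cross :: "nat \<Rightarrow> (nat \<times> nat) set \<Rightarrow> bool" where
  "grid_cross r C \<longleftrightarrow> (\<exists>i\<in>{1..r}. \<exists>j\<in>{1..r}. C = grid_row r i \<union> grid_column r j)"

definition natural_tangle :: "nat \<Rightarrow> ((nat \<times> nat) set \<times> (nat \<times> nat) set) set" where
  "natural_tangle r = {(A', B'). separation (grid_V r) (grid_E r) A' B' \<and> order_less A' B' r \<and>
     (\<exists>C. grid_cross r C \<and> C \<subseteq> B')}"

definition grid_minor_model ::
  "'a set \<Rightarrow> ('a \<Rightarrow> 'a \<Rightarrow> bool) \<Rightarrow> nat \<Rightarrow> (nat \<times> nat \<Rightarrow> 'a set) \<Rightarrow> bool" where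
  "grid_minor_model V E r Vb \<longleftrightarrow>
     (\<forall>h\<in>grid_V r. Vb h \<subseteq> V \<and> connected_set E (Vb h)) \<and>
     (\<forall>h\<in>grid_V r. \<forall>h'\<in>grid_V r. h \<noteq> h' \<longrightarrow> Vb h \<inter> Vb h' = {}) \<and>
     (\<forall>h h'. grid_E r h h' \<longrightarrow> (\<exists>x\<in>Vb h. \<exists>y\<in>Vb h'. E x y))"

definition induced_sep ::
  "nat \<Rightarrow> (nat \<times> nat \<Rightarrow> 'a set) \<Rightarrow> 'a set \<Rightarrow> 'a set \<Rightarrow> (nat \<times> nat) set \<times> (nat \<times> nat) set" where
  "induced_sep r Vb A B = ({h\<in>grid_V r. Vb h \<inter> A \<noteq> {}}, {h\<in>grid_V r. Vb h \<inter> B \<noteq> {}})"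

definition tangle_extension ::
  "'a set \<Rightarrow> ('a \<Rightarrow> 'a \<Rightarrow> bool) \<Rightarrow> nat \<Rightarrow> (nat \<times> nat \<Rightarrow> 'a set) \<Rightarrow> ('a set \<times> 'a set) set" where
  "tangle_extension V E r Vb = {(A, B). separation V E A B \<and> order_less A B r \<and>
     induced_sep r Vb A B \<in> natural_tangle r}"

end

theory Submission
  imports Defs
begin

lemma walk:
  fixes P :: "nat \<Rightarrow> bool"
  assumes st: "\<And>m. lo \<le> m \<Longrightarrow> m < hi \<Longrightarrow> (P m \<longleftrightarrow> P (Suc m))"
    and pa: "P a" and ha: "lo \<le> a" "a \<le> hi" and hb: "lo \<le> b" "b \<le> hi"
  shows "P b"
proof (cases "a \<le> b")
  case True
  have "\<forall>d. a + d \<le> hi \<longrightarrow> P (a + d)"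
  proof
    fix d show "a + d \<le> hi \<longrightarrow> P (a + d)"
    proof (induction d)
      case 0 then show ?case using pa by simp
    next
      case (Suc d)
      show ?case
      proof
        assume h: "a + Suc d \<le> hi"
        then have "P (a + d)" using Suc by simp
        moreover have "lo \<le> a + d" "a + d < hi" using h ha by auto
        ultimately have "P (Suc (a + d))" using st[of "a + d"] by blast
        then show "P (a + Suc d)" by simp
      qed
    qed
  qed
  then have "a + (b - a) \<le> hi \<longrightarrow> P (a + (b - a))" by blast
  moreover have "a + (b - a) = b" using True by simp
  ultimately show ?thesis using hb by simp
next
  case False
  have "\<forall>d. d \<le> a \<and> lo \<le> a - d \<longrightarrow> P (a - d)"
  proof
    fix d show "d \<le> a \<and> lo \<le> a - d \<longrightarrow> P (a - d)"
    proof (induction d)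
      case 0 then show ?case using pa by simp
    next
      case (Suc d)
      show ?case
      proof
        assume h: "Suc d \<le> a \<and> lo \<le> a - Suc d"
        then have "P (a - d)" using Suc by auto
        moreover have "Suc (a - Suc d) = a - d" using h by auto
        moreover have "a - Suc d < hi" using h ha by auto
        moreover have "lo \<le> a - Suc d" using h by simp
        ultimately show "P (a - Suc d)" using st[of "a - Suc d"] by metis
      qed
    qed
  qed
  then have "a - b \<le> a \<and> lo \<le> a - (a - b) \<longrightarrow> P (a - (a - b))" by blast
  moreover have "a - (a - b) = b" using False by simp
  ultimately show ?thesis using hb by simp
qed

lemma grid_bound:
  assumes sep: "separation (grid_V r) (grid_E r) A' B'"
    and cr: "grid_cross r C" and CB: "C \<subseteq> B'"
  shows "A' \<subseteq> fst ` (A' \<inter> B') \<times> snd ` (A' \<inter> B')"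
proof
  fix a assume aA: "a \<in> A'"
  obtain i j where aij: "a = (i, j)" by force
  obtain i0 j0 where i0: "i0 \<in> {1..r}" and j0: "j0 \<in> {1..r}"
    and Ceq: "C = grid_row r i0 \<union> grid_column r j0"
    using cr unfolding grid_cross_def by blast
  have un: "A' \<union> B' = grid_V r" and noE: "\<And>x y. x \<in> A' - B' \<Longrightarrow> y \<in> B' - A' \<Longrightarrow> \<not> grid_E r x y"
    using sep unfolding separation_def by auto
  have "a \<in> grid_V r" using aA un by blast
  then have ij: "i \<in> {1..r}" "j \<in> {1..r}" using aij unfolding grid_V_def by auto
  show "a \<in> fst ` (A' \<inter> B') \<times> snd ` (A' \<inter> B')"
  proof (cases "a \<in> B'")
    case True
    then show ?thesis using aA aij by (metis IntI SigmaI fst_conv image_eqI snd_conv)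
  next
    case False
    have col: "\<exists>i'. (i', j) \<in> A' \<inter> B'"
    proof (rule ccontr)
      assume nc: "\<not> ?thesis"
      have "(i0, j) \<in> A' - B'"
      proof (rule walk[where P = "\<lambda>m. (m, j) \<in> A' - B'" and lo = 1 and hi = r and a = i])
        fix m assume m: "1 \<le> m" "m < r"
        have g1: "(m, j) \<in> grid_V r" "(Suc m, j) \<in> grid_V r" using m ij unfolding grid_V_def by auto
        have e1: "grid_E r (m, j) (Suc m, j)" "grid_E r (Suc m, j) (m, j)"
          using g1 unfolding grid_E_def by auto
        have o1: "(m, j) \<in> A' - B' \<or> (m, j) \<in> B' - A'" using g1 un nc by blast
        have o2: "(Suc m, j) \<in> A' - B' \<or> (Suc m, j) \<in> B' - A'" using g1 un nc by blast
        show "(m, j) \<in> A' - B' \<longleftrightarrow> (Suc m, j) \<in> A' - B'"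
          using o1 o2 noE[of "(m, j)" "(Suc m, j)"] noE[of "(Suc m, j)" "(m, j)"] e1 by auto
      qed (use aA False aij ij i0 in auto)
      moreover have "(i0, j) \<in> B'" using CB Ceq ij unfolding grid_row_def by auto
      ultimately show False by auto
    qed
    have row: "\<exists>j'. (i, j') \<in> A' \<inter> B'"
    proof (rule ccontr)
      assume nc: "\<not> ?thesis"
      have "(i, j0) \<in> A' - B'"
      proof (rule walk[where P = "\<lambda>m. (i, m) \<in> A' - B'" and lo = 1 and hi = r and a = j])
        fix m assume m: "1 \<le> m" "m < r"
        have g1: "(i, m) \<in> grid_V r" "(i, Suc m) \<in> grid_V r" using m ij unfolding grid_V_def by auto
        have e1: "grid_E r (i, m) (i, Suc m)" "grid_E r (i, Suc m) (i, m)"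
          using g1 unfolding grid_E_def by auto
        have o1: "(i, m) \<in> A' - B' \<or> (i, m) \<in> B' - A'" using g1 un nc by blast
        have o2: "(i, Suc m) \<in> A' - B' \<or> (i, Suc m) \<in> B' - A'" using g1 un nc by blast
        show "(i, m) \<in> A' - B' \<longleftrightarrow> (i, Suc m) \<in> A' - B'"
          using o1 o2 noE[of "(i, m)" "(i, Suc m)"] noE[of "(i, Suc m)" "(i, m)"] e1 by auto
      qed (use aA False aij ij j0 in auto)
      moreover have "(i, j0) \<in> B'" using CB Ceq ij unfolding grid_column_def by auto
      ultimately show False by auto
    qed
    from col row obtain i' j' where "(i', j) \<in> A' \<inter> B'" "(i, j') \<in> A' \<inter> B'" by blast
    then show ?thesis using aij by (metis SigmaI fst_conv image_eqI snd_conv)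
  qed
qed

lemma meets_both:
  assumes sep: "separation V E A B" and conn: "connected_set E X" and XV: "X \<subseteq> V"
    and xa: "X \<inter> A \<noteq> {}" and xb: "X \<inter> B \<noteq> {}"
  shows "X \<inter> (A \<inter> B) \<noteq> {}"
proof
  assume disj: "X \<inter> (A \<inter> B) = {}"
  obtain x where x: "x \<in> X" "x \<in> A" using xa by blast
  obtain y where y: "y \<in> X" "y \<in> B" using xb by blast
  have path: "(\<lambda>u v. u \<in> X \<and> v \<in> X \<and> E u v)\<^sup>*\<^sup>* x y" using conn x y unfolding connected_set_def by blast
  have "\<And>z. (\<lambda>u v. u \<in> X \<and> v \<in> X \<and> E u v)\<^sup>*\<^sup>* x z \<Longrightarrow> z \<in> A - B"
  proof -
    fix z assume "(\<lambda>u v. u \<in> X \<and> v \<in> X \<and> E u v)\<^sup>*\<^sup>* x z"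
    then show "z \<in> A - B"
    proof (induction rule: rtranclp_induct)
      case base then show ?case using x disj by auto
    next
      case (step u v)
      have vV: "v \<in> A \<union> B" using step XV sep unfolding separation_def by auto
      have "v \<notin> A \<inter> B" using step disj by auto
      moreover have "\<not> (v \<in> B - A)" using step sep unfolding separation_def by auto
      ultimately show ?case using vV by auto
    qed
  qed
  from this[OF path] y show False by auto
qed

theorem corollary5:
  fixes V :: "'a set" and E :: "'a \<Rightarrow> 'a \<Rightarrow> bool" and r :: nat
    and Vb :: "nat \<times> nat \<Rightarrow> 'a set" and A B :: "'a set"
  assumes "r \<ge> 1"
    and "graph V E"
    and "grid_minor_model V E r Vb"
    and "(A, B) \<in> tangle_extension V E r Vb"
  shows "card {h \<in> grid_V r. Vb h \<inter> A \<noteq> {}} \<le> (card (A \<inter> B))\<^sup>2"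
proof -
  define A' where "A' = {h \<in> grid_V r. Vb h \<inter> A \<noteq> {}}"
  define B' where "B' = {h \<in> grid_V r. Vb h \<inter> B \<noteq> {}}"
  have sep: "separation V E A B" and ord: "order_less A B r"
    and nt: "(A', B') \<in> natural_tangle r"
    using assms(4) unfolding tangle_extension_def induced_sep_def A'_def B'_def by simp_all
  have fin: "finite (A \<inter> B)" using ord unfolding order_less_def by auto
  obtain C where sep': "separation (grid_V r) (grid_E r) A' B'" and cr: "grid_cross r C" and CB: "C \<subseteq> B'"
    using nt unfolding natural_tangle_def by auto
  define X where "X = A' \<inter> B'"
  have finG: "finite (grid_V r)" unfolding grid_V_def by auto
  have finX: "finite X" using finG unfolding X_def A'_def by auto
  have sub: "A' \<subseteq> fst ` X \<times> snd ` X" using grid_bound[OF sep' cr CB] X_def by simp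
  have "card A' \<le> card (fst ` X \<times> snd ` X)" using sub finX by (intro card_mono) auto
  also have "\<dots> = card (fst ` X) * card (snd ` X)" by (rule card_cartesian_product)
  also have "\<dots> \<le> card X * card X" using card_image_le[OF finX] by (intro mult_mono) auto
  finally have c1: "card A' \<le> card X * card X" .
  have pick: "\<forall>h\<in>X. \<exists>v. v \<in> Vb h \<inter> (A \<inter> B)"
  proof
    fix h assume h: "h \<in> X"
    have hg: "h \<in> grid_V r" using h unfolding X_def A'_def by auto
    have "Vb h \<subseteq> V" "connected_set E (Vb h)" using assms(3) hg unfolding grid_minor_model_def by blast+
    moreover have "Vb h \<inter> A \<noteq> {}" "Vb h \<inter> B \<noteq> {}" using h unfolding X_def A'_def B'_def by auto
    ultimately show "\<exists>v. v \<in> Vb h \<inter> (A \<inter> B)" using meets_both[OF sep] by blast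
  qed
  define f where "f h = (SOME v. v \<in> Vb h \<inter> (A \<inter> B))" for h
  have f: "\<And>h. h \<in> X \<Longrightarrow> f h \<in> Vb h \<inter> (A \<inter> B)" using pick unfolding f_def by (metis someI_ex)
  have disj: "\<And>h h'. h \<in> X \<Longrightarrow> h' \<in> X \<Longrightarrow> h \<noteq> h' \<Longrightarrow> Vb h \<inter> Vb h' = {}"
  proof -
    fix h h' assume "h \<in> X" "h' \<in> X" "h \<noteq> h'"
    then have "h \<in> grid_V r" "h' \<in> grid_V r" unfolding X_def A'_def by auto
    then show "Vb h \<inter> Vb h' = {}" using \<open>h \<noteq> h'\<close> assms(3) unfolding grid_minor_model_def by blast
  qed
  have inj: "inj_on f X"
  proof (rule inj_onI)
    fix h h' assume hx: "h \<in> X" "h' \<in> X" and fe: "f h = f h'"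
    show "h = h'"
    proof (rule ccontr)
      assume ne: "h \<noteq> h'"
      have "Vb h \<inter> Vb h' = {}" using disj[OF hx ne] .
      moreover have "f h \<in> Vb h" using f[OF hx(1)] by simp
      moreover have "f h \<in> Vb h'" using f[OF hx(2)] fe by simp
      ultimately show False by blast
    qed
  qed
  have "card X \<le> card (A \<inter> B)" using card_inj_on_le[OF inj _ fin] f by blast
  then have "card X * card X \<le> card (A \<inter> B) * card (A \<inter> B)" by (intro mult_mono) auto
  with c1 show ?thesis unfolding A'_def by (simp add: power2_eq_square)
qed

end
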